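(* Let $D$ be a torus invariant Weil divisor on the cyclic quotient singularity $X$, and let $u^0,\dots,u^r$ be the elements of $G(D)$, ordered so that $\langle u^0,\rho^0\rangle<\langle u^1,\rho^0\rangle<\dots<\langle u^r,\rho^0\rangle$. Let $\pi:\bigoplus_{i=0}^r R[-u^i]\to\Gamma(D)$ be the map $e^i\mapsto x^{u^i}$, and let \[ \iota:\bigoplus_{i=1}^r \big((x^{u^{i-1}})\cap(x^{u^i})\big)\to\bigoplus_{i=0}^r R[-u^i] \] be the map which on the $i$-th summand sends $x^u\mapsto x^{u-u^i}e^i-x^{u-u^{i-1}}e^{i-1}$. Then the sequence \[ 0\to\bigoplus_{i=1}^r\big((x^{u^{i-1}})\cap(x^{u^i})\big)\xrightarrow{\iota}\bigoplus_{i=0}^rR[-u^i]\xrightarrow{\pi}\Gamma(D)\to 0 \] is exact. Furthermore, each fractional ideal $(x^{u^{i-1}})\cap(x^{u^i})$ is divisorial, i.e. equal to $\Gamma(W)$ for some torus invariant Weil divisor $W$.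
   Context: Fix coprime integers $0<q<n$. Let $M=\mathbb Z^2$, $M_{\mathbb Q}=\mathbb Q^2$, with the standard scalar product $\langle\cdot,\cdot\rangle$. Put $\rho^0=(1,0)$, $\rho^1=(-q,n)$, $\sigma^\vee=\{u\in M_{\mathbb Q}:\langle u,\rho^0\rangle\ge 0,\ \langle u,\rho^1\rangle\ge 0\}$, $R=\mathbb C[\sigma^\vee\cap M]$ (monomials $x^u$), $X=\mathrm{Spec}\,R$. A torus invariant Weil divisor is $D=a_0[\rho^0]+a_1[\rho^1]$, $a_i\in\mathbb Z$, with section polyhedron $P_D=\{u\in M_{\mathbb Q}:\langle u,\rho^i\rangle\ge -a_i,\ i=0,1\}$ and global sections $\Gamma(D)=\bigoplus_{u\in P_D\cap M}\mathbb C\,x^u\subseteq\mathbb C[M]$, an $M$-graded $R$-module. $G(D)$ denotes the set of lattice points $u\in M$ lying on a compact edge of the convex hull $\mathrm{conv}(P_D\cap M)$ (these are the minimal homogeneous generators of $\Gamma(D)$). For $u\in M$, $R[-u]$ is the free $M$-graded $R$-module of rank one with basis element $e$ in degree $u$, and $(x^u)=x^uR\subseteq\mathbb C[M]$ is the principal fractional ideal. *)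

theory Defs
  imports "HOL-Analysis.Analysis" "HOL-Library.Poly_Mapping" "HOL-Library.Product_Plus"
begin

text \<open>The lattice M = Z^2 and Laurent polynomials C[M] (finitely supported functions M -> C,
  with convolution product).\<close>
type_synonym lat = "int \<times> int"
type_synonym lpoly = "lat \<Rightarrow>\<^sub>0 complex"

definition pair :: "lat \<Rightarrow> lat \<Rightarrow> int" where
  "pair u v = fst u * fst v + snd u * snd v"

definition rho0 :: lat where "rho0 = (1, 0)"
definition rho1 :: "int \<Rightarrow> int \<Rightarrow> lat" where "rho1 n q = (-q, n)"

definition xmon :: "lat \<Rightarrow> lpoly" where "xmon u = Poly_Mapping.single u 1"

definition sigma_dual_lat :: "int \<Rightarrow> int \<Rightarrow> lat set" where
  "sigma_dual_lat n q = {u. pair u rho0 \<ge> 0 \<and> pair u (rho1 n q) \<ge> 0}"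

text \<open>R = C[sigma^dual \<inter> M], as a subring of C[M]\<close>
definition Rring :: "int \<Rightarrow> int \<Rightarrow> lpoly set" where
  "Rring n q = {f. Poly_Mapping.keys f \<subseteq> sigma_dual_lat n q}"

text \<open>lattice points of the section polyhedron P_D, D = a0[rho0] + a1[rho1]\<close>
definition PD_lat :: "int \<Rightarrow> int \<Rightarrow> int \<Rightarrow> int \<Rightarrow> lat set" where
  "PD_lat n q a0 a1 = {u. pair u rho0 \<ge> -a0 \<and> pair u (rho1 n q) \<ge> -a1}"

definition Gamma :: "int \<Rightarrow> int \<Rightarrow> int \<Rightarrow> int \<Rightarrow> lpoly set" where
  "Gamma n q a0 a1 = {f. Poly_Mapping.keys f \<subseteq> PD_lat n q a0 a1}"

definition princ :: "int \<Rightarrow> int \<Rightarrow> lat \<Rightarrow> lpoly set" where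
  "princ n q u = {xmon u * f | f. f \<in> Rring n q}"

definition realpt :: "lat \<Rightarrow> real \<times> real" where
  "realpt u = (real_of_int (fst u), real_of_int (snd u))"

definition Gset :: "int \<Rightarrow> int \<Rightarrow> int \<Rightarrow> int \<Rightarrow> lat set" where
  "Gset n q a0 a1 = {u. \<exists>F. F face_of convex hull (realpt ` PD_lat n q a0 a1) \<and> compact F \<and> realpt u \<in> F}"

end

theory Submission
  imports Defs
begin


lemma lookup_xmon_mult: "Poly_Mapping.lookup (xmon u * f) w = Poly_Mapping.lookup f (w - u)"
proof -
  have "Poly_Mapping.lookup (xmon u * f) w = (\<Sum>l. Poly_Mapping.lookup (xmon u) l * (\<Sum>q. Poly_Mapping.lookup f q when w = l + q))"
    by (rule lookup_mult)
  also have "\<dots> = (\<Sum>q. Poly_Mapping.lookup f q when w = u + q)"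
  proof -
    have "\<And>l. Poly_Mapping.lookup (xmon u) l * (\<Sum>q. Poly_Mapping.lookup f q when w = l + q) = ((\<Sum>q. Poly_Mapping.lookup f q when w = u + q) when l = u)"
      by (auto simp: xmon_def lookup_single when_def)
    then show ?thesis by simp
  qed
  also have "\<dots> = (\<Sum>q. Poly_Mapping.lookup f q when q = w - u)"
    by (rule Sum_any.cong) (auto simp: when_def algebra_simps)
  also have "\<dots> = Poly_Mapping.lookup f (w - u)" by simp
  finally show ?thesis .
qed

lemma xmon_mult: "xmon a * xmon b = xmon (a + b)"
  by (simp add: xmon_def mult_single)

lemma xmon_zero: "xmon 0 = 1"
  by (simp add: xmon_def)

lemma keys_xmon_mult: "w \<in> Poly_Mapping.keys (xmon u * f) \<longleftrightarrow> w - u \<in> Poly_Mapping.keys f"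
  by (simp add: in_keys_iff lookup_xmon_mult)



definition Bv :: "int \<Rightarrow> int \<Rightarrow> lat \<Rightarrow> int" where "Bv n q p = n * snd p - q * fst p"

lemma pair_rho0[simp]: "pair p rho0 = fst p" by (simp add: pair_def rho0_def)
lemma pair_rho1[simp]: "pair p (rho1 n q) = Bv n q p" by (simp add: pair_def rho1_def Bv_def)
lemma PD_iff: "p \<in> PD_lat n q a0 a1 \<longleftrightarrow> - a0 \<le> fst p \<and> - a1 \<le> Bv n q p"
  by (simp add: PD_lat_def)
lemma sigma_iff: "p \<in> sigma_dual_lat n q \<longleftrightarrow> 0 \<le> fst p \<and> 0 \<le> Bv n q p"
  by (simp add: sigma_dual_lat_def)
lemma Bv_add[simp]: "Bv n q (a + b) = Bv n q a + Bv n q b" by (simp add: Bv_def algebra_simps)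
lemma Bv_diff[simp]: "Bv n q (a - b) = Bv n q a - Bv n q b" by (simp add: Bv_def algebra_simps)
lemma Bv_uminus[simp]: "Bv n q (- a) = - Bv n q a" by (simp add: Bv_def algebra_simps)

lemma inj_AB: assumes "n > 0" "fst p = fst m" "Bv n q p = Bv n q m" shows "p = m"
proof -
  have "n * snd p = n * snd m" using assms by (simp add: Bv_def)
  then have "snd p = snd m" using assms(1) by simp
  then show ?thesis using assms(2) by (simp add: prod_eq_iff)
qed

lemma realpt_in_hull_PD:
  assumes "x \<in> convex hull (realpt ` PD_lat n q a0 a1)"
  shows "- a0 \<le> fst x \<and> - a1 \<le> real_of_int n * snd x - real_of_int q * fst x"
proof -
  let ?H = "{x::real\<times>real. - a0 \<le> fst x \<and> - a1 \<le> real_of_int n * snd x - real_of_int q * fst x}"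
  have "?H = {x. (1::real,0::real) \<bullet> x \<ge> - a0} \<inter> {x. (- real_of_int q, real_of_int n) \<bullet> x \<ge> - a1}"
    by (auto simp: inner_prod_def)
  then have cH: "convex ?H" by (simp add: convex_Int convex_halfspace_ge)
  have "realpt ` PD_lat n q a0 a1 \<subseteq> ?H"
  proof
    fix y assume "y \<in> realpt ` PD_lat n q a0 a1"
    then obtain p where p: "p \<in> PD_lat n q a0 a1" "y = realpt p" by auto
    then have "- a0 \<le> fst p" "- a1 \<le> n * snd p - q * fst p" by (auto simp: PD_iff Bv_def)
    then have "real_of_int (- a0) \<le> real_of_int (fst p)" "real_of_int (- a1) \<le> real_of_int (n * snd p - q * fst p)"
      by linarith+
    then show "y \<in> ?H" using p by (simp add: realpt_def)
  qed
  then have "convex hull (realpt ` PD_lat n q a0 a1) \<subseteq> ?H" using cH by (rule hull_minimal)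
  then show ?thesis using assms by auto
qed

lemma Gset_PD: assumes "u \<in> Gset n q a0 a1" shows "u \<in> PD_lat n q a0 a1"
proof -
  obtain F where F: "F face_of convex hull (realpt ` PD_lat n q a0 a1)" "realpt u \<in> F"
    using assms by (auto simp: Gset_def)
  have "realpt u \<in> convex hull (realpt ` PD_lat n q a0 a1)" using F face_of_imp_subset by blast
  from realpt_in_hull_PD[OF this] have "real_of_int (- a0) \<le> real_of_int (fst u)"
    "real_of_int (- a1) \<le> real_of_int (n * snd u - q * fst u)" by (auto simp: realpt_def)
  then show ?thesis by (simp add: PD_iff Bv_def del: of_int_minus of_int_diff of_int_mult)
qed


lemma Gset_no_below:
  assumes n: "n > 0" and u: "u \<in> Gset n q a0 a1" and v: "v \<in> PD_lat n q a0 a1" and ne: "v \<noteq> u"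
    and le1: "fst v \<le> fst u" and le2: "Bv n q v \<le> Bv n q u"
  shows False
proof -
  obtain F where F: "F face_of convex hull (realpt ` PD_lat n q a0 a1)" "compact F" "realpt u \<in> F"
    using u by (auto simp: Gset_def)
  define s where "s = u - v"
  have s0: "0 \<le> fst s" "0 \<le> Bv n q s" using le1 le2 by (auto simp: s_def)
  have sne: "s \<noteq> 0" using ne by (auto simp: s_def)
  define z where "z = (\<lambda>k::nat. (fst v + int k * fst s, snd v + int k * snd s))"
  have Bz: "Bv n q (z k) = Bv n q v + int k * Bv n q s" for k
    by (simp add: z_def Bv_def algebra_simps)
  have zPD: "z k \<in> PD_lat n q a0 a1" for k
  proof -
    have "0 \<le> int k * fst s" "0 \<le> int k * Bv n q s" using s0 by auto
    moreover have "fst (z k) = fst v + int k * fst s" by (simp add: z_def)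
    ultimately show ?thesis using v unfolding PD_iff Bz by linarith
  qed
  have zF: "realpt (z k) \<in> F" if k: "k \<ge> 2" for k
  proof -
    have hu: "realpt v \<in> convex hull (realpt ` PD_lat n q a0 a1)" by (rule hull_inc[OF imageI[OF v]])
    have hz: "realpt (z k) \<in> convex hull (realpt ` PD_lat n q a0 a1)" by (rule hull_inc[OF imageI[OF zPD]])
    have neq: "realpt v \<noteq> realpt (z k)"
    proof
      assume "realpt v = realpt (z k)"
      then have "fst v = fst (z k)" "snd v = snd (z k)" unfolding realpt_def by simp_all
      then have "int k * fst s = 0" "int k * snd s = 0" unfolding z_def by simp_all
      then have "fst s = 0" "snd s = 0" using k by auto
      then show False using sne by (simp add: prod_eq_iff)
    qed
    have kpos: "real k > 0" using k by simp
    have "realpt u = (1 - 1 / real k) *\<^sub>R realpt v + (1 / real k) *\<^sub>R realpt (z k)"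
    proof -
      have "fst u = fst v + fst s" "snd u = snd v + snd s" by (auto simp: s_def)
      then show ?thesis unfolding realpt_def z_def using kpos by (simp add: prod_eq_iff field_simps)
    qed
    moreover have "0 < 1 / real k" "1 / real k < 1" using k by auto
    ultimately have "realpt u \<in> open_segment (realpt v) (realpt (z k))"
      using neq unfolding in_segment by blast
    then show ?thesis using F(1) F(3) hu hz unfolding face_of_def by blast
  qed
  obtain B where B: "\<And>x. x \<in> F \<Longrightarrow> norm x \<le> B"
    using compact_imp_bounded[OF F(2)] by (auto simp: bounded_iff)
  have "fst s \<noteq> 0 \<or> snd s \<noteq> 0" using sne by (auto simp: prod_eq_iff)
  then show False
  proof
    assume fs: "fst s \<noteq> 0"
    define k where "k = nat (\<lceil>B\<rceil> + \<bar>fst v\<bar> + 2)"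
    have B0: "0 \<le> B" using B[OF F(3)] norm_ge_zero[of "realpt u"] by linarith
    then have "0 \<le> \<lceil>B\<rceil>" by simp
    then have kk: "int k = \<lceil>B\<rceil> + \<bar>fst v\<bar> + 2" unfolding k_def by simp
    then have "int 2 \<le> int k" using \<open>0 \<le> \<lceil>B\<rceil>\<close> by simp
    then have k2: "k \<ge> 2" by (simp only: of_nat_le_iff)
    have "norm (realpt (z k)) \<le> B" using B zF k2 by blast
    moreover have "\<bar>real_of_int (fst (z k))\<bar> \<le> norm (realpt (z k))"
      using norm_fst_le[of "real_of_int (fst (z k))" "real_of_int (snd (z k))"] by (simp add: realpt_def)
    moreover have "\<bar>fst (z k)\<bar> \<ge> int k - \<bar>fst v\<bar>"
    proof -
      have "1 \<le> \<bar>fst s\<bar>" using fs by linarith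
      then have "int k * 1 \<le> int k * \<bar>fst s\<bar>" by (intro mult_left_mono) auto
      then have "\<bar>int k * fst s\<bar> \<ge> int k" by (simp add: abs_mult)
      moreover have "fst (z k) = fst v + int k * fst s" by (simp add: z_def)
      ultimately show ?thesis by arith
    qed
    moreover have "real_of_int (int k) \<ge> B + \<bar>real_of_int (fst v)\<bar> + 1"
    proof -
      have "real_of_int (int k) = real_of_int \<lceil>B\<rceil> + \<bar>real_of_int (fst v)\<bar> + 2" using kk by simp
      then show ?thesis using le_of_int_ceiling[of B] by linarith
    qed
    ultimately have "real_of_int \<bar>fst (z k)\<bar> \<le> B" "real_of_int \<bar>fst (z k)\<bar> \<ge> real_of_int (int k) - \<bar>real_of_int (fst v)\<bar>"
      by (simp_all add: of_int_abs[symmetric] del: of_int_abs)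
    then show False using \<open>real_of_int (int k) \<ge> B + \<bar>real_of_int (fst v)\<bar> + 1\<close> by linarith
  next
    assume fs: "snd s \<noteq> 0"
    define k where "k = nat (\<lceil>B\<rceil> + \<bar>snd v\<bar> + 2)"
    have B0: "0 \<le> B" using B[OF F(3)] norm_ge_zero[of "realpt u"] by linarith
    then have "0 \<le> \<lceil>B\<rceil>" by simp
    then have kk: "int k = \<lceil>B\<rceil> + \<bar>snd v\<bar> + 2" unfolding k_def by simp
    then have "int 2 \<le> int k" using \<open>0 \<le> \<lceil>B\<rceil>\<close> by simp
    then have k2: "k \<ge> 2" by (simp only: of_nat_le_iff)
    have "norm (realpt (z k)) \<le> B" using B zF k2 by blast
    moreover have "\<bar>real_of_int (snd (z k))\<bar> \<le> norm (realpt (z k))"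
      using norm_snd_le[of "real_of_int (snd (z k))" "real_of_int (fst (z k))"] by (simp add: realpt_def)
    moreover have "\<bar>snd (z k)\<bar> \<ge> int k - \<bar>snd v\<bar>"
    proof -
      have "1 \<le> \<bar>snd s\<bar>" using fs by linarith
      then have "int k * 1 \<le> int k * \<bar>snd s\<bar>" by (intro mult_left_mono) auto
      then have "\<bar>int k * snd s\<bar> \<ge> int k" by (simp add: abs_mult)
      moreover have "snd (z k) = snd v + int k * snd s" by (simp add: z_def)
      ultimately show ?thesis by arith
    qed
    moreover have "real_of_int (int k) \<ge> B + \<bar>real_of_int (snd v)\<bar> + 1"
    proof -
      have "real_of_int (int k) = real_of_int \<lceil>B\<rceil> + \<bar>real_of_int (snd v)\<bar> + 2" using kk by simp
      then show ?thesis using le_of_int_ceiling[of B] by linarith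
    qed
    ultimately have "real_of_int \<bar>snd (z k)\<bar> \<le> B" "real_of_int \<bar>snd (z k)\<bar> \<ge> real_of_int (int k) - \<bar>real_of_int (snd v)\<bar>"
      by (simp_all add: of_int_abs[symmetric] del: of_int_abs)
    then show False using \<open>real_of_int (int k) \<ge> B + \<bar>real_of_int (snd v)\<bar> + 1\<close> by linarith
  qed
qed


lemma desc:
  fixes n q a0 a1 :: int and m :: lat
  assumes mmin: "\<And>p. p \<in> PD_lat n q a0 a1 \<Longrightarrow> fst p \<le> fst m \<Longrightarrow> Bv n q p \<le> Bv n q m \<Longrightarrow> p = m"
  shows "P \<in> PD_lat n q a0 a1 \<Longrightarrow> R \<in> PD_lat n q a0 a1 \<Longrightarrow> fst P < fst m \<Longrightarrow> Bv n q P > Bv n q m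
    \<Longrightarrow> fst R > fst m \<Longrightarrow> Bv n q R < Bv n q m
    \<Longrightarrow> (fst P - fst m) * (Bv n q R - Bv n q m) \<le> (fst R - fst m) * (Bv n q P - Bv n q m)"
proof (induction "nat (fst R - fst m + Bv n q P - Bv n q m)" arbitrary: P R rule: less_induct)
  case less
  define x1 where "x1 = fst P - fst m"
  define y1 where "y1 = Bv n q P - Bv n q m"
  define x2 where "x2 = fst R - fst m"
  define y2 where "y2 = Bv n q R - Bv n q m"
  define T where "T = P + R - m"
  have aT: "fst T - fst m = x1 + x2" by (simp add: T_def x1_def x2_def)
  have bT: "Bv n q T - Bv n q m = y1 + y2" by (simp add: T_def y1_def y2_def)
  have TPD: "T \<in> PD_lat n q a0 a1"
    using less.prems aT bT unfolding PD_iff x1_def x2_def y1_def y2_def by linarith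
  have s: "x1 < 0" "y1 > 0" "x2 > 0" "y2 < 0" using less.prems by (auto simp: x1_def x2_def y1_def y2_def)
  show ?case unfolding x1_def[symmetric] x2_def[symmetric] y1_def[symmetric] y2_def[symmetric]
  proof -
    consider "x1 + x2 \<le> 0" "y1 + y2 \<le> 0" | "x1 + x2 > 0" "y1 + y2 < 0" | "x1 + x2 < 0" "y1 + y2 > 0"
      | "x1 + x2 \<ge> 0" "y1 + y2 \<ge> 0" by linarith
    then show "x1 * y2 \<le> x2 * y1"
    proof cases
      case 1
      then have "T = m" using mmin[OF TPD] aT bT by linarith
      then have "x1 + x2 = 0" "y1 + y2 = 0" using aT bT by auto
      then have "x1 = - x2" "y1 = - y2" by auto
      then show ?thesis by simp
    next
      case 2
      have "(fst P - fst m) * (Bv n q T - Bv n q m) \<le> (fst T - fst m) * (Bv n q P - Bv n q m)"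
        apply (rule less.hyps)
        using less.prems TPD aT bT 2 s unfolding x1_def x2_def y1_def y2_def by auto
      then have "x1 * (y1 + y2) \<le> (x1 + x2) * y1" using aT bT by (simp add: x1_def y1_def)
      then show ?thesis by (simp add: algebra_simps)
    next
      case 3
      have "(fst T - fst m) * (Bv n q R - Bv n q m) \<le> (fst R - fst m) * (Bv n q T - Bv n q m)"
        apply (rule less.hyps)
        using less.prems TPD aT bT 3 s unfolding x1_def x2_def y1_def y2_def by auto
      then have "(x1 + x2) * y2 \<le> x2 * (y1 + y2)" using aT bT by (simp add: x2_def y2_def)
      then show ?thesis by (simp add: algebra_simps)
    next
      case 4
      have "0 \<le> x2 * (y1 + y2)" using 4 s by simp
      moreover have "0 \<le> (- y2) * (x1 + x2)" using 4 s by (intro mult_nonneg_nonneg) auto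
      ultimately show ?thesis by (simp add: algebra_simps)
    qed
  qed
qed


lemma exists_minimal:
  assumes n: "n > 0" and w: "w \<in> PD_lat n q a0 a1"
  shows "\<exists>m\<in>PD_lat n q a0 a1. fst m \<le> fst w \<and> Bv n q m \<le> Bv n q w \<and>
           (\<forall>p. p \<in> PD_lat n q a0 a1 \<longrightarrow> fst p \<le> fst m \<longrightarrow> Bv n q p \<le> Bv n q m \<longrightarrow> p = m)"
proof -
  let ?P = "\<lambda>p. p \<in> PD_lat n q a0 a1 \<and> fst p \<le> fst w \<and> Bv n q p \<le> Bv n q w"
  let ?mu = "\<lambda>p. nat (fst p + Bv n q p + a0 + a1)"
  obtain m where m: "?P m" "\<And>y. ?P y \<Longrightarrow> ?mu m \<le> ?mu y"
    using ex_has_least_nat[of ?P w ?mu] w by auto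
  have "p = m" if p: "p \<in> PD_lat n q a0 a1" "fst p \<le> fst m" "Bv n q p \<le> Bv n q m" for p
  proof -
    have "?P p" using p m(1) by auto
    then have "?mu m \<le> ?mu p" by (rule m(2))
    moreover have "0 \<le> fst p + Bv n q p + a0 + a1" "0 \<le> fst m + Bv n q m + a0 + a1"
      using p(1) m(1) by (auto simp: PD_iff)
    ultimately have "fst m + Bv n q m \<le> fst p + Bv n q p" by linarith
    then have "fst p = fst m" "Bv n q p = Bv n q m" using p by linarith+
    then show "p = m" using inj_AB[OF n] by blast
  qed
  then show ?thesis using m(1) by blast
qed


lemma exists_c:
  fixes n q a0 a1 :: int and m :: lat
  assumes mPD: "m \<in> PD_lat n q a0 a1"
    and mmin: "\<And>p. p \<in> PD_lat n q a0 a1 \<Longrightarrow> fst p \<le> fst m \<Longrightarrow> Bv n q p \<le> Bv n q m \<Longrightarrow> p = m"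
  shows "\<exists>c::real. c > 0 \<and> (\<forall>p\<in>PD_lat n q a0 a1.
           real_of_int (fst p - fst m) + c * real_of_int (Bv n q p - Bv n q m) \<ge> 0)"
proof -
  define PD where "PD = PD_lat n q a0 a1"
  define da where "da p = real_of_int (fst p - fst m)" for p :: lat
  define db where "db p = real_of_int (Bv n q p - Bv n q m)" for p :: lat
  define S1 where "S1 = (\<lambda>p. (- da p) / db p) ` {p\<in>PD. fst p < fst m \<and> Bv n q p > Bv n q m}"
  define eps where "eps = 1 / (1 + real_of_int (Bv n q m + a1))"
  define c where "c = Sup (insert eps S1)"
  have beta: "0 \<le> Bv n q m + a1" "0 \<le> fst m + a0" using mPD by (auto simp: PD_iff)
  have eps_pos: "eps > 0" using beta unfolding eps_def by simp
  have S1b: "x \<le> real_of_int (fst m + a0)" if xS: "x \<in> S1" for x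
  proof -
    obtain p where p: "p \<in> PD" "fst p < fst m" "Bv n q p > Bv n q m" "x = (- da p) / db p"
      using xS unfolding S1_def by blast
    have db1: "db p \<ge> 1" using p unfolding db_def by simp
    have da0: "- da p > 0" using p unfolding da_def by simp
    have "da p * db p \<le> da p * 1" using db1 da0 by (intro mult_left_mono_neg) auto
    then have "da p \<le> da p / db p" using db1 by (simp add: le_divide_eq)
    then have "(- da p) / db p \<le> - da p" by simp
    moreover have "- da p \<le> real_of_int (fst m + a0)" using p(1) unfolding da_def PD_def PD_iff by simp
    ultimately show ?thesis using p(4) by simp
  qed
  have bdd: "bdd_above (insert eps S1)"
    unfolding bdd_above_def using S1b by (intro exI[of _ "max eps (real_of_int (fst m + a0))"]) force
  have c_ge: "x \<le> c" if "x \<in> insert eps S1" for x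
    unfolding c_def using bdd that by (rule cSup_upper[rotated])
  have cpos: "c > 0" using c_ge[of eps] eps_pos by simp
  have c_le: "c \<le> da R / (- db R)" if R: "R \<in> PD" "fst R > fst m" "Bv n q R < Bv n q m" for R
    unfolding c_def
  proof (rule cSup_least)
    fix x assume "x \<in> insert eps S1"
    then show "x \<le> da R / (- db R)"
    proof
      assume x: "x = eps"
      have da1: "da R \<ge> 1" using R unfolding da_def by simp
      have db0: "0 < - db R" "- db R \<le> real_of_int (Bv n q m + a1)"
        using R unfolding db_def PD_def PD_iff by auto
      have pos: "0 < 1 + real_of_int (Bv n q m + a1)" using beta by simp
      have "0 < (1 + real_of_int (Bv n q m + a1)) * (- db R)" using pos db0(1) by (rule mult_pos_pos)
      then have "eps \<le> 1 / (- db R)" unfolding eps_def using db0 by (intro divide_left_mono) auto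
      also have "\<dots> \<le> da R / (- db R)" using da1 db0 by (intro divide_right_mono) auto
      finally show ?thesis using x by simp
    next
      assume "x \<in> S1"
      then obtain p where p: "p \<in> PD" "fst p < fst m" "Bv n q p > Bv n q m" "x = (- da p) / db p"
        unfolding S1_def by blast
      have "(fst p - fst m) * (Bv n q R - Bv n q m) \<le> (fst R - fst m) * (Bv n q p - Bv n q m)"
        using desc[of n q a0 a1 m p R] mmin p R unfolding PD_def by blast
      then have "da p * db R \<le> da R * db p" unfolding da_def db_def
        by (simp only: of_int_mult[symmetric] of_int_le_iff)
      moreover have "db p > 0" "- db R > 0" using p R unfolding db_def by auto
      ultimately have "(- da p) / db p \<le> da R / (- db R)"
        by (simp add: divide_simps)
      then show ?thesis using p(4) by simp
    qed
  qed auto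
  have "da p + c * db p \<ge> 0" if p: "p \<in> PD" for p
  proof -
    consider "fst p \<le> fst m" "Bv n q p \<le> Bv n q m" | "fst p < fst m" "Bv n q p > Bv n q m"
      | "fst p > fst m" "Bv n q p < Bv n q m" | "fst p \<ge> fst m" "Bv n q p \<ge> Bv n q m" by linarith
    then show ?thesis
    proof cases
      case 1
      then have "p = m" using mmin p unfolding PD_def by blast
      then show ?thesis by (simp add: da_def db_def)
    next
      case 2
      then have "(- da p) / db p \<le> c" using c_ge p unfolding S1_def by blast
      moreover have "db p > 0" using 2 unfolding db_def by simp
      ultimately have "- da p \<le> c * db p" by (simp add: divide_simps mult.commute)
      then show ?thesis by simp
    next
      case 3
      then have "c \<le> da p / (- db p)" using c_le p by blast
      moreover have "- db p > 0" using 3 unfolding db_def by simp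
      ultimately have "c * (- db p) \<le> da p" by (simp add: divide_simps)
      then show ?thesis by simp
    next
      case 4
      then have "da p \<ge> 0" "db p \<ge> 0" unfolding da_def db_def by auto
      then show ?thesis using cpos by simp
    qed
  qed
  then show ?thesis using cpos unfolding da_def db_def PD_def by blast
qed



lemma finite_level:
  fixes n q a0 a1 :: int and m :: lat and c :: real
  assumes n: "n > 0" and c: "c > 0" and mPD: "m \<in> PD_lat n q a0 a1"
  shows "finite {p\<in>PD_lat n q a0 a1. real_of_int (fst p - fst m) + c * real_of_int (Bv n q p - Bv n q m) = 0}"
proof -
  define al where "al = real_of_int (fst m + a0)"
  define be where "be = real_of_int (Bv n q m + a1)"
  have ab: "al \<ge> 0" "be \<ge> 0" using mPD by (auto simp: PD_iff al_def be_def)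
  define R0 where "R0 = \<bar>real_of_int (fst m)\<bar> + al + c * be + \<bar>real_of_int (Bv n q m)\<bar> + be + al / c"
  define R1 where "R1 = R0 + \<bar>real_of_int q\<bar> * R0"
  define N where "N = \<lceil>R1\<rceil>"
  have sub: "{p\<in>PD_lat n q a0 a1. real_of_int (fst p - fst m) + c * real_of_int (Bv n q p - Bv n q m) = 0}
      \<subseteq> {-N..N} \<times> {-N..N}"
  proof
    fix p assume "p \<in> {p\<in>PD_lat n q a0 a1. real_of_int (fst p - fst m) + c * real_of_int (Bv n q p - Bv n q m) = 0}"
    then have pPD: "p \<in> PD_lat n q a0 a1" and eq: "real_of_int (fst p - fst m) + c * real_of_int (Bv n q p - Bv n q m) = 0"
      by auto
    define da where "da = real_of_int (fst p - fst m)"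
    define db where "db = real_of_int (Bv n q p - Bv n q m)"
    have eq': "da + c * db = 0" using eq unfolding da_def db_def .
    have da_ge: "da \<ge> - al" and db_ge: "db \<ge> - be" using pPD unfolding da_def db_def al_def be_def PD_iff by auto
    have "c * db \<le> al" using eq' da_ge by linarith
    then have db_le: "db \<le> al / c" using c by (simp add: le_divide_eq mult.commute)
    have "c * (- be) \<le> c * db" using db_ge c by (intro mult_left_mono) auto
    then have "c * db \<ge> - (c * be)" by simp
    then have da_le: "da \<le> c * be" using eq' by linarith
    have c0: "c * be \<ge> 0" "al / c \<ge> 0" using c ab by auto
    have R00: "R0 \<ge> 0" unfolding R0_def using ab c0 by simp
    have f1: "\<bar>real_of_int (fst p)\<bar> \<le> R0"
    proof -
      have "real_of_int (fst p) = real_of_int (fst m) + da" unfolding da_def by simp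
      then show ?thesis unfolding R0_def using da_ge da_le ab c0 by linarith
    qed
    have f2: "\<bar>real_of_int (Bv n q p)\<bar> \<le> R0"
    proof -
      have "real_of_int (Bv n q p) = real_of_int (Bv n q m) + db" unfolding db_def by simp
      then show ?thesis unfolding R0_def using db_ge db_le ab c0 by linarith
    qed
    have "\<bar>real_of_int q * real_of_int (fst p)\<bar> \<le> \<bar>real_of_int q\<bar> * R0"
      unfolding abs_mult using f1 by (intro mult_left_mono) auto
    moreover have "real_of_int n * real_of_int (snd p) = real_of_int (Bv n q p) + real_of_int q * real_of_int (fst p)"
      by (simp add: Bv_def)
    ultimately have "\<bar>real_of_int n * real_of_int (snd p)\<bar> \<le> R1" unfolding R1_def using f2 by linarith
    moreover have "\<bar>real_of_int (snd p)\<bar> \<le> \<bar>real_of_int n * real_of_int (snd p)\<bar>"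
    proof -
      have "1 * \<bar>real_of_int (snd p)\<bar> \<le> \<bar>real_of_int n\<bar> * \<bar>real_of_int (snd p)\<bar>"
        using n by (intro mult_right_mono) auto
      then show ?thesis by (simp add: abs_mult)
    qed
    ultimately have s1: "\<bar>real_of_int (snd p)\<bar> \<le> R1" by linarith
    have f1': "\<bar>real_of_int (fst p)\<bar> \<le> R1" using f1 R00 unfolding R1_def
      by (meson abs_ge_zero le_add_same_cancel1 mult_nonneg_nonneg order_trans)
    have "\<bar>fst p\<bar> \<le> N" "\<bar>snd p\<bar> \<le> N" unfolding N_def using f1' s1 le_of_int_ceiling[of R1]
      by (simp_all add: le_ceiling_iff)
    then show "p \<in> {-N..N} \<times> {-N..N}" by (cases p) auto
  qed
  then show ?thesis by (rule finite_subset) auto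
qed

lemma minimal_Gset:
  fixes n q a0 a1 :: int and m :: lat
  assumes n: "n > 0" and mPD: "m \<in> PD_lat n q a0 a1"
    and mmin: "\<And>p. p \<in> PD_lat n q a0 a1 \<Longrightarrow> fst p \<le> fst m \<Longrightarrow> Bv n q p \<le> Bv n q m \<Longrightarrow> p = m"
  shows "m \<in> Gset n q a0 a1"
proof -
  obtain c :: real where cpos: "c > 0" and cge: "\<And>p. p \<in> PD_lat n q a0 a1 \<Longrightarrow>
           real_of_int (fst p - fst m) + c * real_of_int (Bv n q p - Bv n q m) \<ge> 0"
    using exists_c[OF mPD mmin] by blast
  define L where "L = realpt ` PD_lat n q a0 a1"
  define a :: "real \<times> real" where "a = (1 - c * real_of_int q, c * real_of_int n)"
  have ia: "a \<bullet> realpt p = real_of_int (fst p) + c * real_of_int (Bv n q p)" for p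
    by (simp add: a_def realpt_def Bv_def algebra_simps)
  define k where "k = a \<bullet> realpt m"
  have geL: "a \<bullet> x \<ge> k" if xL: "x \<in> L" for x
  proof -
    obtain p where p: "p \<in> PD_lat n q a0 a1" "x = realpt p" using xL unfolding L_def by blast
    show ?thesis using cge[OF p(1)] unfolding p(2) k_def ia by (simp add: algebra_simps)
  qed
  have geP: "a \<bullet> x \<ge> k" if "x \<in> convex hull L" for x
  proof -
    have "convex hull L \<subseteq> {x. a \<bullet> x \<ge> k}"
      by (rule hull_minimal) (use geL convex_halfspace_ge in auto)
    then show ?thesis using that by auto
  qed
  define F where "F = convex hull L \<inter> {x. a \<bullet> x = k}"
  have Fface: "F face_of convex hull L" unfolding F_def
    by (rule face_of_Int_supporting_hyperplane_ge[OF convex_convex_hull geP])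
  have mF: "realpt m \<in> F" unfolding F_def k_def L_def using mPD by (auto intro: hull_inc)
  define T where "T = L \<inter> {x. a \<bullet> x = k}"
  have mT: "realpt m \<in> T" unfolding T_def k_def L_def using mPD by auto
  have FT: "F = convex hull T"
  proof
    show "convex hull T \<subseteq> F" unfolding F_def
    proof (rule Int_greatest)
      show "convex hull T \<subseteq> convex hull L" unfolding T_def by (rule hull_mono) auto
      show "convex hull T \<subseteq> {x. a \<bullet> x = k}"
        by (rule hull_minimal) (auto simp: T_def convex_hyperplane)
    qed
    show "F \<subseteq> convex hull T"
    proof
      fix x assume "x \<in> F"
      then have xh: "x \<in> convex hull L" and xk: "a \<bullet> x = k" unfolding F_def by auto
      obtain S u where S: "finite S" "S \<subseteq> L" "\<And>v. v \<in> S \<Longrightarrow> 0 \<le> u v" "sum u S = 1"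
        "(\<Sum>v\<in>S. u v *\<^sub>R v) = x"
        using xh unfolding convex_hull_explicit by blast
      have "(\<Sum>v\<in>S. u v * (a \<bullet> v - k)) = a \<bullet> x - k * sum u S"
        unfolding S(5)[symmetric] by (simp add: inner_sum_right algebra_simps sum_subtractf sum_distrib_left)
      then have sum0: "(\<Sum>v\<in>S. u v * (a \<bullet> v - k)) = 0" using xk S(4) by simp
      have nn: "\<And>v. v \<in> S \<Longrightarrow> 0 \<le> u v * (a \<bullet> v - k)"
        using S(2,3) geL by (meson diff_ge_0_iff_ge mult_nonneg_nonneg subsetD)
      have zero: "u v * (a \<bullet> v - k) = 0" if "v \<in> S" for v
        using sum_nonneg_eq_0_iff[OF S(1), of "\<lambda>v. u v * (a \<bullet> v - k)"] nn sum0 that by blast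
      define y where "y v = (if v \<in> T then v else realpt m)" for v
      have "(\<Sum>v\<in>S. u v *\<^sub>R y v) \<in> convex hull T"
        by (rule convex_sum[OF S(1) convex_convex_hull S(4)])
           (use S(3) mT in \<open>auto simp: y_def intro: hull_inc\<close>)
      moreover have "(\<Sum>v\<in>S. u v *\<^sub>R y v) = x"
        unfolding S(5)[symmetric]
      proof (rule sum.cong[OF refl])
        fix v assume v: "v \<in> S"
        show "u v *\<^sub>R y v = u v *\<^sub>R v"
        proof (cases "v \<in> T")
          case True then show ?thesis by (simp add: y_def)
        next
          case False
          then have "a \<bullet> v \<noteq> k" using v S(2) unfolding T_def by auto
          then have "u v = 0" using zero[OF v] by simp
          then show ?thesis by simp
        qed
      qed
      ultimately show "x \<in> convex hull T" by simp
    qed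
  qed
  have finT: "finite T"
  proof -
    have "T \<subseteq> realpt ` {p\<in>PD_lat n q a0 a1. real_of_int (fst p - fst m) + c * real_of_int (Bv n q p - Bv n q m) = 0}"
    proof
      fix x assume "x \<in> T"
      then obtain p where p: "p \<in> PD_lat n q a0 a1" "x = realpt p" "a \<bullet> realpt p = k"
        unfolding T_def L_def by blast
      then have "real_of_int (fst p - fst m) + c * real_of_int (Bv n q p - Bv n q m) = 0"
        unfolding k_def ia by (simp add: algebra_simps)
      then show "x \<in> realpt ` {p\<in>PD_lat n q a0 a1. real_of_int (fst p - fst m) + c * real_of_int (Bv n q p - Bv n q m) = 0}"
        using p by blast
    qed
    then show ?thesis using finite_level[OF n cpos mPD] finite_subset by blast
  qed
  have "compact F" unfolding FT using finT by (simp add: compact_convex_hull finite_imp_compact)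
  then show ?thesis unfolding Gset_def using Fface mF unfolding L_def by blast
qed


lemma below_Gset:
  assumes n: "n > 0" and w: "w \<in> PD_lat n q a0 a1"
  shows "\<exists>v\<in>Gset n q a0 a1. fst v \<le> fst w \<and> Bv n q v \<le> Bv n q w"
  using exists_minimal[OF n w] minimal_Gset[OF n] by blast


lemma princ_iff: "f \<in> princ n q u \<longleftrightarrow> (\<forall>w\<in>Poly_Mapping.keys f. fst u \<le> fst w \<and> Bv n q u \<le> Bv n q w)"
proof
  assume "f \<in> princ n q u"
  then obtain g where g: "g \<in> Rring n q" "f = xmon u * g" by (auto simp: princ_def)
  show "\<forall>w\<in>Poly_Mapping.keys f. fst u \<le> fst w \<and> Bv n q u \<le> Bv n q w"
  proof
    fix w assume "w \<in> Poly_Mapping.keys f"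
    then have "w - u \<in> Poly_Mapping.keys g" using g(2) keys_xmon_mult by blast
    then have "w - u \<in> sigma_dual_lat n q" using g(1) by (auto simp: Rring_def)
    then show "fst u \<le> fst w \<and> Bv n q u \<le> Bv n q w" by (simp add: sigma_iff)
  qed
next
  assume H: "\<forall>w\<in>Poly_Mapping.keys f. fst u \<le> fst w \<and> Bv n q u \<le> Bv n q w"
  define g where "g = xmon (- u) * f"
  have "xmon u * g = f" unfolding g_def by (simp add: mult.assoc[symmetric] xmon_mult xmon_zero)
  moreover have "g \<in> Rring n q" unfolding Rring_def mem_Collect_eq
  proof
    fix w assume "w \<in> Poly_Mapping.keys g"
    then have "w + u \<in> Poly_Mapping.keys f" unfolding g_def keys_xmon_mult by simp
    then show "w \<in> sigma_dual_lat n q" using H by (force simp: sigma_iff)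
  qed
  ultimately show "f \<in> princ n q u" unfolding princ_def by blast
qed

lemma Rring_iff: "f \<in> Rring n q \<longleftrightarrow> (\<forall>w\<in>Poly_Mapping.keys f. 0 \<le> fst w \<and> 0 \<le> Bv n q w)"
  by (auto simp: Rring_def sigma_iff)

lemma Gamma_iff: "f \<in> Gamma n q a0 a1 \<longleftrightarrow> (\<forall>w\<in>Poly_Mapping.keys f. - a0 \<le> fst w \<and> - a1 \<le> Bv n q w)"
  by (auto simp: Gamma_def PD_iff)

lemma xmon_cancel: "xmon (- a) * (xmon a * f) = f" "xmon a * (xmon (- a) * f) = f"
  by (simp_all add: mult.assoc[symmetric] xmon_mult xmon_zero)

lemma xmon_inj: "xmon a * f = xmon a * g \<Longrightarrow> f = g"
  by (metis xmon_cancel(1))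

lemma Rring_xmon: assumes "g \<in> princ n q u" shows "xmon (- u) * g \<in> Rring n q"
  unfolding Rring_iff
proof
  fix w assume "w \<in> Poly_Mapping.keys (xmon (- u) * g)"
  then have "w + u \<in> Poly_Mapping.keys g" by (simp add: keys_xmon_mult)
  then have "fst u \<le> fst (w + u) \<and> Bv n q u \<le> Bv n q (w + u)" using assms unfolding princ_iff by blast
  then show "0 \<le> fst w \<and> 0 \<le> Bv n q w" by simp
qed

lemma Rring_diff: "f \<in> Rring n q \<Longrightarrow> g \<in> Rring n q \<Longrightarrow> f - g \<in> Rring n q"
  unfolding Rring_iff using keys_diff by (metis (no_types, lifting) Un_iff keys_add keys_minus subsetD diff_conv_add_uminus)

lemma Rring_zero: "0 \<in> Rring n q" by (simp add: Rring_iff)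

lemma keys_sum_sub: "w \<in> Poly_Mapping.keys (sum F A) \<Longrightarrow> \<exists>i\<in>A. w \<in> Poly_Mapping.keys (F i)"
  using keys_sum[of F A] by (auto simp del: keys_sum)

lemma sum_tele:
  fixes h :: "nat \<Rightarrow> 'a::ab_group_add"
  shows "(\<Sum>j\<le>r. (if 1 \<le> j then h j else 0)) = (\<Sum>j\<le>r. (if j + 1 \<le> r then h (j + 1) else 0))"
proof -
  have A: "(\<Sum>j\<le>r. (if 1 \<le> j then h j else 0)) = (\<Sum>j<r. h (Suc j))" for r
  proof (induction r)
    case 0 then show ?case by simp
  next
    case (Suc r) then show ?case by (simp add: sum.atMost_Suc)
  qed
  have B: "(\<Sum>j\<le>r. (if j + 1 \<le> r then h (j + 1) else 0)) = (\<Sum>j<r. h (Suc j))"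
  proof (cases r)
    case 0 then show ?thesis by simp
  next
    case (Suc r')
    have "(\<Sum>j\<le>r. (if j + 1 \<le> r then h (j + 1) else 0)) = (\<Sum>j\<le>r'. (if j + 1 \<le> r then h (j + 1) else 0))"
      using Suc by (simp add: sum.atMost_Suc)
    also have "\<dots> = (\<Sum>j\<le>r'. h (Suc j))" using Suc by (intro sum.cong) auto
    finally show ?thesis using Suc by (simp add: lessThan_Suc_atMost)
  qed
  show ?thesis using A B by simp
qed



lemma iota_eval:
  fixes j r :: nat and u :: "nat \<Rightarrow> lat" and g :: "nat \<Rightarrow> lpoly"
  shows
  "(\<Sum>i\<in>{1..r}. (if j = i then xmon (- u i) * g i else if j = i - 1 then - (xmon (- u (i - 1)) * g i) else 0))
   = (if 1 \<le> j \<and> j \<le> r then xmon (- u j) * g j else 0) - (if j + 1 \<le> r then xmon (- u j) * g (j + 1) else 0)"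
proof -
  have "(\<Sum>i\<in>{1..r}. (if j = i then xmon (- u i) * g i else if j = i - 1 then - (xmon (- u (i - 1)) * g i) else 0))
    = (\<Sum>i\<in>{1..r}. (if i = j then xmon (- u i) * g i else 0) + (if i = j + 1 then - (xmon (- u (i - 1)) * g i) else 0))"
  proof (rule sum.cong[OF refl])
    fix i assume "i \<in> {1..r}"
    then have e: "(j = i - 1) = (i = j + 1)" by auto
    show "(if j = i then xmon (- u i) * g i else if j = i - 1 then - (xmon (- u (i - 1)) * g i) else 0) =
      (if i = j then xmon (- u i) * g i else 0) + (if i = j + 1 then - (xmon (- u (i - 1)) * g i) else 0)"
      unfolding e by (cases "i = j"; cases "i = j + 1") auto
  qed
  also have "\<dots> = (\<Sum>i\<in>{1..r}. (if i = j then xmon (- u i) * g i else 0)) + (\<Sum>i\<in>{1..r}. (if i = j + 1 then - (xmon (- u (i - 1)) * g i) else 0))"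
    by (rule sum.distrib)
  also have "\<dots> = (if 1 \<le> j \<and> j \<le> r then xmon (- u j) * g j else 0) - (if j + 1 \<le> r then xmon (- u j) * g (j + 1) else 0)"
    by (simp add: sum.delta)
  finally show ?thesis .
qed

theorem mainTheorem3:
  fixes n q a0 a1 :: int and r :: nat and u :: "nat \<Rightarrow> lat"
  assumes "0 < q" and "q < n" and "coprime q n"
    and "u ` {0..r} = Gset n q a0 a1"
    and "\<And>i j. i < j \<Longrightarrow> j \<le> r \<Longrightarrow> pair (u i) rho0 < pair (u j) rho0"
  defines "Free \<equiv> {f :: nat \<Rightarrow> lpoly. (\<forall>i\<le>r. f i \<in> Rring n q) \<and> (\<forall>i>r. f i = 0)}"
    and "I \<equiv> (\<lambda>i. princ n q (u (i - 1)) \<inter> princ n q (u i))"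
    and "Dom \<equiv> {g :: nat \<Rightarrow> lpoly. (\<forall>i\<in>{1..r}. g i \<in> princ n q (u (i - 1)) \<inter> princ n q (u i)) \<and> (\<forall>i. i \<notin> {1..r} \<longrightarrow> g i = 0)}"
    and "\<pi> \<equiv> (\<lambda>f :: nat \<Rightarrow> lpoly. \<Sum>i\<le>r. xmon (u i) * f i)"
    and "\<iota> \<equiv> (\<lambda>(g :: nat \<Rightarrow> lpoly) j. \<Sum>i\<in>{1..r}.
              (if j = i then xmon (- u i) * g i
               else if j = i - 1 then - (xmon (- u (i - 1)) * g i) else 0))"
  shows "\<iota> ` Dom \<subseteq> Free \<and> \<pi> ` Free = Gamma n q a0 a1
         \<and> inj_on \<iota> Dom \<and> \<iota> ` Dom = {f \<in> Free. \<pi> f = 0}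
         \<and> (\<forall>i\<in>{1..r}. \<exists>b0 b1. I i = Gamma n q b0 b1)"
proof -
  note Free_def = assms(6) and I_def = assms(7) and Dom_def = assms(8) and pi_def = assms(9)
    and iota_def = assms(10)
  have n: "n > 0" using assms(1,2) by simp
  have uPD: "u i \<in> PD_lat n q a0 a1" if "i \<le> r" for i
  proof -
    have "u i \<in> Gset n q a0 a1" using assms(4) that by auto
    then show ?thesis by (rule Gset_PD)
  qed
  have fl: "fst (u i) < fst (u j)" if "i < j" "j \<le> r" for i j
    using assms(5)[OF that] by simp
  have bl: "Bv n q (u j) < Bv n q (u i)" if ij: "i < j" "j \<le> r" for i j
  proof (rule ccontr)
    assume "\<not> ?thesis"
    then have le2: "Bv n q (u i) \<le> Bv n q (u j)" by simp
    have G: "u j \<in> Gset n q a0 a1" using assms(4) ij by auto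
    have ne: "u i \<noteq> u j" using fl[OF ij] by auto
    have le1: "fst (u i) \<le> fst (u j)" using fl[OF ij] by simp
    show False using Gset_no_below[OF n G uPD[of i] ne le1 le2] ij by simp
  qed
  have fle: "fst (u i) \<le> fst (u j)" if "i \<le> j" "j \<le> r" for i j
    using fl that by (cases "i = j") (auto simp: order.order_iff_strict)
  have ble: "Bv n q (u j) \<le> Bv n q (u i)" if "i \<le> j" "j \<le> r" for i j
    using bl that by (cases "i = j") (auto simp: order.order_iff_strict)
  have iota_ev: "\<iota> g j = (if 1 \<le> j \<and> j \<le> r then xmon (- u j) * g j else 0) - (if j + 1 \<le> r then xmon (- u j) * g (j + 1) else 0)" for g j
    unfolding iota_def by (simp only: iota_eval)
  have pi_ev: "\<pi> f = (\<Sum>i\<le>r. xmon (u i) * f i)" for f unfolding pi_def by simp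
  have P1: "\<iota> g \<in> Free" if g: "g \<in> Dom" for g
  proof -
    have "\<iota> g j \<in> Rring n q" if j: "j \<le> r" for j
    proof -
      have "(if 1 \<le> j \<and> j \<le> r then xmon (- u j) * g j else 0) \<in> Rring n q"
        using g Rring_xmon Rring_zero unfolding Dom_def by auto
      moreover have "(if j + 1 \<le> r then xmon (- u j) * g (j + 1) else 0) \<in> Rring n q"
      proof (cases "j + 1 \<le> r")
        case True
        then have "j + 1 \<in> {1..r}" by simp
        then have "g (j + 1) \<in> princ n q (u (j + 1 - 1))" using g unfolding Dom_def by blast
        then have "xmon (- u j) * g (j + 1) \<in> Rring n q" using Rring_xmon by simp
        then show ?thesis using True by simp
      qed (simp add: Rring_zero)
      ultimately show ?thesis unfolding iota_ev by (rule Rring_diff)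
    qed
    moreover have "\<iota> g j = 0" if "j > r" for j using that unfolding iota_ev by simp
    ultimately show ?thesis unfolding Free_def by blast
  qed
  have P2a: "\<pi> f \<in> Gamma n q a0 a1" if f: "f \<in> Free" for f
    unfolding Gamma_iff pi_ev
  proof
    fix w assume "w \<in> Poly_Mapping.keys (\<Sum>i\<le>r. xmon (u i) * f i)"
    then obtain i where i: "i \<le> r" "w \<in> Poly_Mapping.keys (xmon (u i) * f i)"
      using keys_sum_sub by fastforce
    then have "w - u i \<in> Poly_Mapping.keys (f i)" by (simp add: keys_xmon_mult)
    moreover have "f i \<in> Rring n q" using f i(1) unfolding Free_def by blast
    ultimately have "0 \<le> fst (w - u i) \<and> 0 \<le> Bv n q (w - u i)" unfolding Rring_iff by blast
    then show "- a0 \<le> fst w \<and> - a1 \<le> Bv n q w" using uPD[OF i(1)] unfolding PD_iff by simp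
  qed
  have P2b: "f \<in> \<pi> ` Free" if f: "f \<in> Gamma n q a0 a1" for f
  proof -
    have ex: "\<exists>i. i \<le> r \<and> fst (u i) \<le> fst w \<and> Bv n q (u i) \<le> Bv n q w" if w: "w \<in> Poly_Mapping.keys f" for w
    proof -
      have "w \<in> PD_lat n q a0 a1" using f w unfolding Gamma_iff PD_iff by blast
      then obtain v where v: "v \<in> Gset n q a0 a1" "fst v \<le> fst w" "Bv n q v \<le> Bv n q w"
        using below_Gset[OF n] by blast
      then obtain i where "i \<in> {0..r}" "v = u i" using assms(4) by (metis imageE)
      then show ?thesis using v by auto
    qed
    define ch where "ch w = (SOME i. i \<le> r \<and> fst (u i) \<le> fst w \<and> Bv n q (u i) \<le> Bv n q w)" for w
    have ch: "ch w \<le> r \<and> fst (u (ch w)) \<le> fst w \<and> Bv n q (u (ch w)) \<le> Bv n q w"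
      if "w \<in> Poly_Mapping.keys f" for w
      unfolding ch_def by (rule someI_ex[OF ex[OF that]])
    define h where "h i = Poly_Mapping.mapp (\<lambda>w x. if ch w = i then x else 0) f" for i
    have lh: "Poly_Mapping.lookup (h i) w = (if w \<in> Poly_Mapping.keys f \<and> ch w = i then Poly_Mapping.lookup f w else 0)" for i w
      unfolding h_def lookup_mapp by (simp add: when_def)
    define fi where "fi i = (if i \<le> r then xmon (- u i) * h i else 0)" for i
    have fiF: "fi \<in> Free"
    proof -
      have "fi i \<in> Rring n q" if i: "i \<le> r" for i
        unfolding Rring_iff
      proof
        fix w' assume "w' \<in> Poly_Mapping.keys (fi i)"
        then have "w' + u i \<in> Poly_Mapping.keys (h i)" using i unfolding fi_def by (simp add: keys_xmon_mult)
        then have k: "w' + u i \<in> Poly_Mapping.keys f" "ch (w' + u i) = i"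
          unfolding in_keys_iff lh by (auto split: if_splits)
        from ch[OF k(1)] k(2) show "0 \<le> fst w' \<and> 0 \<le> Bv n q w'" by simp
      qed
      moreover have "fi i = 0" if "i > r" for i using that unfolding fi_def by simp
      ultimately show ?thesis unfolding Free_def by blast
    qed
    have "\<pi> fi = (\<Sum>i\<le>r. h i)" unfolding pi_ev fi_def by (simp add: xmon_cancel)
    also have "\<dots> = f"
    proof (rule poly_mapping_eqI)
      fix w
      show "Poly_Mapping.lookup (\<Sum>i\<le>r. h i) w = Poly_Mapping.lookup f w"
      proof (cases "w \<in> Poly_Mapping.keys f")
        case True
        then have "ch w \<le> r" using ch by blast
        then show ?thesis using True unfolding lookup_sum lh by (simp add: sum.delta')
      next
        case False
        then show ?thesis unfolding lookup_sum lh by (simp add: in_keys_iff)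
      qed
    qed
    finally show ?thesis using fiF by blast
  qed
  have P2: "\<pi> ` Free = Gamma n q a0 a1" using P2a P2b by blast
  have P3: "inj_on \<iota> Dom"
  proof (rule inj_onI)
    fix g g' assume g: "g \<in> Dom" and g': "g' \<in> Dom" and eq: "\<iota> g = \<iota> g'"
    have "g i = g' i" for i
    proof (induction i)
      case 0 then show ?case using g g' unfolding Dom_def by auto
    next
      case (Suc i)
      show ?case
      proof (cases "Suc i \<le> r")
        case False
        then show ?thesis using g g' unfolding Dom_def by auto
      next
        case True
        have "\<iota> g i = \<iota> g' i" using eq by simp
        then have "xmon (- u i) * g (i + 1) = xmon (- u i) * g' (i + 1)"
          unfolding iota_ev Suc.IH using True by simp
        then show ?thesis by (simp add: xmon_inj)
      qed
    qed
    then show "g = g'" by blast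
  qed
  have P4a: "\<pi> (\<iota> g) = 0" if g: "g \<in> Dom" for g
  proof -
    have "\<pi> (\<iota> g) = (\<Sum>j\<le>r. (if 1 \<le> j \<and> j \<le> r then g j else 0) - (if j + 1 \<le> r then g (j + 1) else 0))"
      unfolding pi_ev iota_ev by (intro sum.cong) (auto simp: right_diff_distrib xmon_cancel)
    also have "\<dots> = (\<Sum>j\<le>r. (if 1 \<le> j then g j else 0)) - (\<Sum>j\<le>r. (if j + 1 \<le> r then g (j + 1) else 0))"
      by (simp add: sum_subtractf)
    also have "\<dots> = 0" using sum_tele[of g r] by simp
    finally show ?thesis .
  qed
  have P4b: "f \<in> \<iota> ` Dom" if f: "f \<in> Free" and pf: "\<pi> f = 0" for f
  proof -
    define Gs where "Gs i = (\<Sum>j\<in>{i..r}. xmon (u j) * f j)" for i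
    define g where "g i = (if i \<in> {1..r} then Gs i else 0)" for i
    have Gs0: "Gs 0 = 0" using pf unfolding Gs_def pi_ev by (simp add: atLeast0AtMost)
    have Gsr: "Gs i = 0" if "i > r" for i using that unfolding Gs_def by simp
    have Gsstep: "Gs j - Gs (j + 1) = xmon (u j) * f j" if "j \<le> r" for j
      unfolding Gs_def using that by (simp add: sum.atLeast_Suc_atMost)
    have Gsneg: "Gs i = - (\<Sum>j<i. xmon (u j) * f j)" if "i \<le> r" for i
    proof -
      have "{..r} = {..<i} \<union> {i..r}" using that by auto
      then have "(\<Sum>j\<le>r. xmon (u j) * f j) = (\<Sum>j<i. xmon (u j) * f j) + Gs i"
        unfolding Gs_def by (simp add: sum.union_disjoint ivl_disj_int)
      then show ?thesis using pf unfolding pi_ev by (simp add: eq_neg_iff_add_eq_0 add.commute)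
    qed
    have gDom: "g \<in> Dom"
    proof -
      have "g i \<in> princ n q (u (i - 1)) \<inter> princ n q (u i)" if i: "i \<in> {1..r}" for i
      proof -
        have "fst (u (i - 1)) \<le> fst w \<and> Bv n q (u (i - 1)) \<le> Bv n q w \<and>
              fst (u i) \<le> fst w \<and> Bv n q (u i) \<le> Bv n q w" if w: "w \<in> Poly_Mapping.keys (g i)" for w
        proof -
          have w1: "w \<in> Poly_Mapping.keys (\<Sum>j\<in>{i..r}. xmon (u j) * f j)" using w i unfolding g_def Gs_def by simp
          obtain j where j: "j \<in> {i..r}" "w \<in> Poly_Mapping.keys (xmon (u j) * f j)"
            using keys_sum_sub[OF w1] by blast
          have "w - u j \<in> Poly_Mapping.keys (f j)" using j(2) by (simp add: keys_xmon_mult)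
          moreover have "f j \<in> Rring n q" using f j(1) unfolding Free_def by auto
          ultimately have J: "fst (u j) \<le> fst w" "Bv n q (u j) \<le> Bv n q w" unfolding Rring_iff by force+
          have w2: "w \<in> Poly_Mapping.keys (\<Sum>j<i. xmon (u j) * f j)"
            using w i Gsneg[of i] unfolding g_def by simp
          obtain j' where j': "j' < i" "w \<in> Poly_Mapping.keys (xmon (u j') * f j')"
            using keys_sum_sub[OF w2] by blast
          have "w - u j' \<in> Poly_Mapping.keys (f j')" using j'(2) by (simp add: keys_xmon_mult)
          moreover have "f j' \<in> Rring n q" using f j'(1) i unfolding Free_def by auto
          ultimately have J': "fst (u j') \<le> fst w" "Bv n q (u j') \<le> Bv n q w" unfolding Rring_iff by force+
          have "fst (u (i - 1)) \<le> fst (u i)" "fst (u i) \<le> fst (u j)" using fle i j(1) by auto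
          moreover have "Bv n q (u (i - 1)) \<le> Bv n q (u j')" "Bv n q (u i) \<le> Bv n q (u (i - 1))"
            using ble i j'(1) by auto
          ultimately show ?thesis using J J' by linarith
        qed
        then show ?thesis unfolding Int_iff princ_iff by blast
      qed
      moreover have "g i = 0" if ni: "i \<notin> {1..r}" for i using ni unfolding g_def by auto
      ultimately show ?thesis unfolding Dom_def by blast
    qed
    have "\<iota> g = f"
    proof
      fix j
      show "\<iota> g j = f j"
      proof (cases "j \<le> r")
        case False
        then show ?thesis using f unfolding iota_ev Free_def by auto
      next
        case True
        have a: "(if 1 \<le> j \<and> j \<le> r then xmon (- u j) * g j else 0) = xmon (- u j) * Gs j"
          using True Gs0 unfolding g_def by (cases j) auto
        have b: "(if j + 1 \<le> r then xmon (- u j) * g (j + 1) else 0) = xmon (- u j) * Gs (j + 1)"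
          using True Gsr[of "j + 1"] unfolding g_def by auto
        have "\<iota> g j = xmon (- u j) * (Gs j - Gs (j + 1))"
          unfolding iota_ev a b by (simp add: right_diff_distrib)
        also have "\<dots> = f j" using Gsstep[OF True] by (simp add: xmon_cancel)
        finally show ?thesis .
      qed
    qed
    then show ?thesis using gDom by blast
  qed
  have P4: "\<iota> ` Dom = {f \<in> Free. \<pi> f = 0}" using P1 P4a P4b by blast
  have P5: "\<exists>b0 b1. I i = Gamma n q b0 b1" if i: "i \<in> {1..r}" for i
  proof -
    have m1: "fst (u (i - 1)) \<le> fst (u i)" "Bv n q (u i) \<le> Bv n q (u (i - 1))"
      using fle ble i by auto
    have "I i = Gamma n q (- fst (u i)) (- Bv n q (u (i - 1)))"
      unfolding I_def Gamma_iff
    proof (intro set_eqI)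
      fix f
      show "f \<in> princ n q (u (i - 1)) \<inter> princ n q (u i) \<longleftrightarrow> f \<in> Gamma n q (- fst (u i)) (- Bv n q (u (i - 1)))"
        unfolding Gamma_iff Int_iff princ_iff using m1 by (auto intro: order_trans)
    qed
    then show ?thesis by blast
  qed
  show ?thesis using P1 P2 P3 P4 P5 by blast
qed


end
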